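(* Let $F_0$ and $F_s$ be distribution functions, $U_r(t):=F_r^{\leftarrow}(1-1/t)=\bigl(1/(1-F_r)\bigr)^{\leftarrow}(t)$ for $t>1$, $r\in\{0,s\}$, and let $c\in\mathbb{R}$, $s\ge0$. Suppose $F_0$ is in the max-domain of attraction of $G_\gamma(x)=\exp\{-(1+\gamma x)^{-1/\gamma}\}$ with $\gamma>0$. Then $$\lim_{x\to\infty}\frac{1-F_s(x)}{1-F_0(x)}=e^{cs}\quad\Longleftrightarrow\quad\lim_{t\to\infty}\frac{U_s(t)}{U_0(t)}=e^{c\gamma s}.$$
   Context: $F^{\leftarrow}$ denotes the generalized (left-continuous) inverse. For $\gamma>0$ the right endpoint of $F_0$ is $+\infty$. *)

theory Defs
  imports "HOL-Analysis.Analysis"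
begin

definition distribution_function :: "(real \<Rightarrow> real) \<Rightarrow> bool" where
  "distribution_function F \<longleftrightarrow>
     mono F \<and> (\<forall>x. continuous (at_right x) F) \<and>
     (F \<longlongrightarrow> 0) at_bot \<and> (F \<longlongrightarrow> 1) at_top"

definition gen_inv :: "(real \<Rightarrow> real) \<Rightarrow> real \<Rightarrow> real" where
  "gen_inv F p = Inf {x. p \<le> F x}"

definition tail_quantile :: "(real \<Rightarrow> real) \<Rightarrow> real \<Rightarrow> real" where
  "tail_quantile F t = gen_inv F (1 - 1 / t)"

definition gev :: "real \<Rightarrow> real \<Rightarrow> real" where
  "gev \<gamma> x =
     (if \<gamma> = 0 then exp (- exp (- x))
      else if 1 + \<gamma> * x > 0 then exp (- ((1 + \<gamma> * x) powr (- 1 / \<gamma>)))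
      else if \<gamma> > 0 then 0 else 1)"

definition max_domain_of_attraction :: "(real \<Rightarrow> real) \<Rightarrow> real \<Rightarrow> bool" where
  "max_domain_of_attraction F \<gamma> \<longleftrightarrow>
     (\<exists>a b :: nat \<Rightarrow> real. (\<forall>n. a n > 0) \<and>
        (\<forall>x. isCont (gev \<gamma>) x \<longrightarrow>
             (\<lambda>n. F (a n * x + b n) ^ n) \<longlonglongrightarrow> gev \<gamma> x))"

end

theory Submission
  imports Defs
begin


lemma df_bounds:
  assumes "distribution_function F"
  shows "0 \<le> F x" "F x \<le> 1"
proof -
  have m: "mono F" and t0: "(F \<longlongrightarrow> 0) at_bot" and t1: "(F \<longlongrightarrow> 1) at_top"
    using assms by (auto simp: distribution_function_def)
  have "eventually (\<lambda>y. F y \<le> F x) at_bot"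
    using m by (auto simp: eventually_at_bot_linorder mono_def)
  then show "0 \<le> F x" using tendsto_upperbound[OF t0] by auto
  have "eventually (\<lambda>y. F x \<le> F y) at_top"
    using m by (auto simp: eventually_at_top_linorder mono_def)
  then show "F x \<le> 1" using tendsto_lowerbound[OF t1] by auto
qed

lemma gen_inv_galois:
  assumes "distribution_function F" "0 < p" "p < 1"
  shows "gen_inv F p \<le> x \<longleftrightarrow> p \<le> F x"
proof -
  have m: "mono F" and t0: "(F \<longlongrightarrow> 0) at_bot" and t1: "(F \<longlongrightarrow> 1) at_top"
    and rc: "\<And>x. continuous (at_right x) F"
    using assms by (auto simp: distribution_function_def)
  define S where "S = {x. p \<le> F x}"
  have "eventually (\<lambda>y. F y > p) at_top" using t1 assms(3) by (rule order_tendstoD)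
  then obtain y0 where "F y0 > p" by (auto simp: eventually_at_top_linorder)
  then have ne: "S \<noteq> {}" unfolding S_def by (auto intro!: exI[of _ y0])
  have "eventually (\<lambda>y. F y < p) at_bot" using t0 assms(2) by (rule order_tendstoD)
  then obtain b where b: "\<And>y. y \<le> b \<Longrightarrow> F y < p" by (auto simp: eventually_at_bot_linorder)
  have bdd: "bdd_below S"
    unfolding S_def bdd_below_def
    by (rule exI[of _ b]) (auto, metis b not_le linorder_le_less_linear less_le_not_le)
  have inS: "p \<le> F (Inf S)"
  proof (rule tendsto_lowerbound)
    show "(F \<longlongrightarrow> F (Inf S)) (at_right (Inf S))"
      using rc[of "Inf S"] by (simp add: continuous_within)
    show "\<forall>\<^sub>F i in at_right (Inf S). p \<le> F i"
    proof (rule eventually_at_rightI[of "Inf S" "Inf S + 1"])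
      fix y assume "y \<in> {Inf S<..<Inf S + 1}"
      then have "Inf S < y" by auto
      then obtain s where "s \<in> S" "s < y" using cInf_less_iff[OF ne bdd] by auto
      then show "p \<le> F y" using m unfolding S_def mono_def by (meson order.trans less_imp_le mem_Collect_eq)
    qed auto
  qed simp
  show ?thesis
  proof
    assume "gen_inv F p \<le> x"
    then have "Inf S \<le> x" by (simp add: gen_inv_def S_def)
    then show "p \<le> F x" using inS m by (meson mono_def order.trans)
  next
    assume "p \<le> F x"
    then have "x \<in> S" by (simp add: S_def)
    then show "gen_inv F p \<le> x" using bdd by (simp add: gen_inv_def S_def[symmetric] cInf_lower)
  qed
qed

lemma tq_galois:
  assumes "distribution_function F" "t > 1"
  shows "tail_quantile F t \<le> x \<longleftrightarrow> 1 - F x \<le> 1 / t"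
proof -
  have "0 < 1 - 1/t" "1 - 1/t < 1" using assms(2) by (auto simp: field_simps)
  then show ?thesis unfolding tail_quantile_def using gen_inv_galois[OF assms(1)] by auto
qed



lemma pow_lim:
  fixes p :: "nat \<Rightarrow> real"
  assumes p01: "\<And>n. 0 \<le> p n" "\<And>n. p n \<le> 1" and lim: "(\<lambda>n. p n ^ n) \<longlonglongrightarrow> exp (- G)"
  shows "(\<lambda>n. real n * (1 - p n)) \<longlonglongrightarrow> G"
proof -
  have "eventually (\<lambda>n. p n ^ n > 0) sequentially"
    using lim by (rule order_tendstoD) simp
  then have evp: "eventually (\<lambda>n. p n > 0) sequentially"
    using eventually_gt_at_top[of 0]
    by eventually_elim (metis p01(1) less_eq_real_def zero_less_power_eq gr_implies_not0 power_0_left)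
  have "(\<lambda>n. ln (p n ^ n)) \<longlonglongrightarrow> ln (exp (- G))"
    by (rule tendsto_ln[OF lim]) simp
  then have l1: "(\<lambda>n. ln (p n ^ n)) \<longlonglongrightarrow> - G" by simp
  have l2: "(\<lambda>n. real n * ln (p n)) \<longlonglongrightarrow> - G"
    using l1 by (rule Lim_transform_eventually) (use evp in \<open>eventually_elim, simp add: ln_realpow\<close>)
  have "(\<lambda>n. (real n * ln (p n)) * inverse (real n)) \<longlonglongrightarrow> - G * 0"
    by (rule tendsto_mult[OF l2 lim_inverse_n])
  then have "(\<lambda>n. (real n * ln (p n)) * inverse (real n)) \<longlonglongrightarrow> 0" by simp
  then have l3: "(\<lambda>n. ln (p n)) \<longlonglongrightarrow> 0"
    by (rule Lim_transform_eventually) (use eventually_gt_at_top[of 0] in \<open>eventually_elim, simp\<close>)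
  have "(\<lambda>n. exp (ln (p n))) \<longlonglongrightarrow> exp 0" by (rule tendsto_exp[OF l3])
  then have "(\<lambda>n. exp (ln (p n))) \<longlonglongrightarrow> 1" by simp
  then have l4: "p \<longlonglongrightarrow> 1"
    by (rule Lim_transform_eventually) (use evp in \<open>eventually_elim, simp\<close>)
  have up: "(\<lambda>n. - (real n * ln (p n))) \<longlonglongrightarrow> G" using tendsto_minus[OF l2] by simp
  have lo: "(\<lambda>n. p n * (- (real n * ln (p n)))) \<longlonglongrightarrow> G" using tendsto_mult[OF l4 up] by simp
  show ?thesis
  proof (rule tendsto_sandwich[OF _ _ lo up])
    show "\<forall>\<^sub>F n in sequentially. p n * - (real n * ln (p n)) \<le> real n * (1 - p n)"
      using evp
    proof eventually_elim
      case (elim n)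
      have "ln (1 / p n) \<le> 1 / p n - 1" using elim by (intro ln_le_minus_one) simp
      then have "- ln (p n) \<le> (1 - p n) / p n" using elim by (simp add: ln_div field_simps)
      then have "p n * (- ln (p n)) \<le> 1 - p n" using elim by (simp add: field_simps)
      then have "real n * (p n * (- ln (p n))) \<le> real n * (1 - p n)" by (intro mult_left_mono) auto
      then show ?case by (simp add: algebra_simps)
    qed
    show "\<forall>\<^sub>F n in sequentially. real n * (1 - p n) \<le> - (real n * ln (p n))"
      using evp
    proof eventually_elim
      case (elim n)
      have "ln (p n) \<le> p n - 1" using elim by (intro ln_le_minus_one)
      then have "real n * (1 - p n) \<le> real n * (- ln (p n))" by (intro mult_left_mono) auto
      then show ?case by simp
    qed
  qed
qed



lemma mda_H:
  assumes df: "distribution_function F" and g: "\<gamma> > 0" and mda: "max_domain_of_attraction F \<gamma>"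
  shows "\<exists>d e. (\<forall>n. e n > 0) \<and>
     (\<forall>z>0. (\<lambda>n. real n * (1 - F (d n + e n * z))) \<longlonglongrightarrow> z powr (-1/\<gamma>))"
proof -
  obtain a b :: "nat \<Rightarrow> real" where apos: "\<forall>n. a n > 0" and
    conv: "\<forall>x. isCont (gev \<gamma>) x \<longrightarrow> (\<lambda>n. F (a n * x + b n) ^ n) \<longlonglongrightarrow> gev \<gamma> x"
    using mda unfolding max_domain_of_attraction_def by blast
  define e where "e n = a n / \<gamma>" for n
  define d where "d n = b n - a n / \<gamma>" for n
  have epos: "\<forall>n. e n > 0" using apos g by (simp add: e_def)
  have "(\<lambda>n. real n * (1 - F (d n + e n * z))) \<longlonglongrightarrow> z powr (-1/\<gamma>)" if z: "z > 0" for z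
  proof -
    define x where "x = (z - 1) / \<gamma>"
    have zx: "1 + \<gamma> * x = z" using g by (simp add: x_def field_simps)
    have op: "open {y::real. 0 < 1 + \<gamma> * y}"
      by (intro open_Collect_less continuous_intros)
    have ev: "eventually (\<lambda>y. gev \<gamma> y = exp (- ((1 + \<gamma> * y) powr (-1/\<gamma>)))) (nhds x)"
      using eventually_nhds_in_open[OF op, of x] zx z g
      by (auto elim!: eventually_mono simp: gev_def)
    have "isCont (\<lambda>y. exp (- ((1 + \<gamma> * y) powr (-1/\<gamma>)))) x"
      using zx z by (intro continuous_intros) auto
    then have ic: "isCont (gev \<gamma>) x" using isCont_cong[OF ev] by simp
    have gx: "gev \<gamma> x = exp (- (z powr (-1/\<gamma>)))" using zx z g by (simp add: gev_def)
    have eq: "a n * x + b n = d n + e n * z" for n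
      using g by (simp add: x_def d_def e_def field_simps)
    have "(\<lambda>n. F (a n * x + b n) ^ n) \<longlonglongrightarrow> gev \<gamma> x" using conv ic by blast
    then have "(\<lambda>n. F (d n + e n * z) ^ n) \<longlonglongrightarrow> exp (- (z powr (-1/\<gamma>)))"
      unfolding eq gx .
    then show ?thesis using df_bounds[OF df] by (intro pow_lim[of "\<lambda>n. F (d n + e n * z)"]) auto
  qed
  then show ?thesis using epos by blast
qed



locale evt =
  fixes V :: "real \<Rightarrow> real" and d e :: "nat \<Rightarrow> real" and \<gamma> :: real
  assumes anti: "\<And>x y. x \<le> y \<Longrightarrow> V y \<le> V x"
    and epos: "\<And>n. e n > 0" and gpos: "\<gamma> > 0"
    and H: "\<And>z. z > 0 \<Longrightarrow> (\<lambda>n. real n * V (d n + e n * z)) \<longlonglongrightarrow> z powr (-1/\<gamma>)"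
begin

lemma Hc:
  assumes "filterlim N sequentially F" "z > 0"
  shows "((\<lambda>i. real (N i) * V (d (N i) + e (N i) * z)) \<longlongrightarrow> z powr (-1/\<gamma>)) F"
  by (rule filterlim_compose[OF H[OF assms(2)] assms(1)])

lemma gdec: "0 < z1 \<Longrightarrow> z1 < z2 \<Longrightarrow> z2 powr (-1/\<gamma>) < z1 powr (-1/\<gamma>)"
  using gpos by (intro powr_less_mono2_neg) auto

lemma less_of_V: "V y < V x \<Longrightarrow> x < y"
  using anti by (meson not_le)

lemma INV:
  assumes N: "filterlim N sequentially F" and z0: "z0 > 0"
    and lim: "((\<lambda>i. real (N i) * V (x i)) \<longlongrightarrow> z0 powr (-1/\<gamma>)) F"
  shows "((\<lambda>i. (x i - d (N i)) / e (N i)) \<longlongrightarrow> z0) F"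
proof (rule order_tendstoI)
  fix a assume a: "a > z0"
  let ?m = "(a powr (-1/\<gamma>) + z0 powr (-1/\<gamma>)) / 2"
  have lt: "a powr (-1/\<gamma>) < z0 powr (-1/\<gamma>)" using gdec z0 a by blast
  have e1: "eventually (\<lambda>i. real (N i) * V (d (N i) + e (N i) * a) < ?m) F"
    using Hc[OF N, of a] a z0 lt by (intro order_tendstoD) auto
  have e2: "eventually (\<lambda>i. ?m < real (N i) * V (x i)) F"
    using lim lt by (intro order_tendstoD) auto
  show "eventually (\<lambda>i. (x i - d (N i)) / e (N i) < a) F"
    using e1 e2
  proof eventually_elim
    case (elim i)
    then have "real (N i) * V (d (N i) + e (N i) * a) < real (N i) * V (x i)" by linarith
    then have "V (d (N i) + e (N i) * a) < V (x i)"
      by (rule mult_left_less_imp_less) simp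
    then have "x i < d (N i) + e (N i) * a" by (rule less_of_V)
    then show ?case using epos[of "N i"] by (simp add: field_simps)
  qed
next
  fix a0 assume a0: "a0 < z0"
  define a where "a = max a0 (z0/2)"
  have a: "0 < a" "a < z0" "a0 \<le> a" using a0 z0 by (auto simp: a_def)
  let ?m = "(a powr (-1/\<gamma>) + z0 powr (-1/\<gamma>)) / 2"
  have lt: "z0 powr (-1/\<gamma>) < a powr (-1/\<gamma>)" using gdec a by blast
  have e1: "eventually (\<lambda>i. ?m < real (N i) * V (d (N i) + e (N i) * a)) F"
    using Hc[OF N, of a] a z0 lt by (intro order_tendstoD) auto
  have e2: "eventually (\<lambda>i. real (N i) * V (x i) < ?m) F"
    using lim lt by (intro order_tendstoD) auto
  show "eventually (\<lambda>i. a0 < (x i - d (N i)) / e (N i)) F"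
    using e1 e2
  proof eventually_elim
    case (elim i)
    then have "real (N i) * V (x i) < real (N i) * V (d (N i) + e (N i) * a)" by linarith
    then have "V (x i) < V (d (N i) + e (N i) * a)"
      by (rule mult_left_less_imp_less) simp
    then have "d (N i) + e (N i) * a < x i" by (rule less_of_V)
    then have "a < (x i - d (N i)) / e (N i)" using epos[of "N i"] by (simp add: field_simps)
    then show ?case using a by linarith
  qed
qed

lemma gcont: "z0 > 0 \<Longrightarrow> ((\<lambda>y. y powr (-1/\<gamma>)) \<longlongrightarrow> z0 powr (-1/\<gamma>)) (at z0)"
  by (rule isCont_tendsto_compose[where g="\<lambda>y. y powr (-1/\<gamma>)" and f="\<lambda>y. y"]) (auto intro!: continuous_intros)

lemma FWD:
  assumes N: "filterlim N sequentially F" and z0: "z0 > 0"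
    and lim: "((\<lambda>i. (x i - d (N i)) / e (N i)) \<longlongrightarrow> z0) F"
  shows "((\<lambda>i. real (N i) * V (x i)) \<longlongrightarrow> z0 powr (-1/\<gamma>)) F"
proof (rule order_tendstoI)
  fix b assume b: "b > z0 powr (-1/\<gamma>)"
  have "((\<lambda>y. y powr (-1/\<gamma>)) \<longlongrightarrow> z0 powr (-1/\<gamma>)) (at_left z0)"
    using gcont[OF z0] filterlim_at_split by blast
  then have "eventually (\<lambda>y. y powr (-1/\<gamma>) < b) (at_left z0)" using b by (rule order_tendstoD)
  then obtain b' where b': "b' < z0" "\<And>y. b' < y \<Longrightarrow> y < z0 \<Longrightarrow> y powr (-1/\<gamma>) < b"
    unfolding eventually_at_left_field by blast
  define a where "a = max ((b' + z0)/2) (z0/2)"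
  have a: "0 < a" "a < z0" "b' < a" using b' z0 unfolding a_def by (auto simp: max_def)
  have ga: "a powr (-1/\<gamma>) < b" using b' a by blast
  have e1: "eventually (\<lambda>i. real (N i) * V (d (N i) + e (N i) * a) < b) F"
    using Hc[OF N, of a] a ga by (intro order_tendstoD) auto
  have e2: "eventually (\<lambda>i. a < (x i - d (N i)) / e (N i)) F"
    using lim a by (intro order_tendstoD) auto
  show "eventually (\<lambda>i. real (N i) * V (x i) < b) F"
    using e1 e2
  proof eventually_elim
    case (elim i)
    then have "d (N i) + e (N i) * a < x i" using epos[of "N i"] by (simp add: field_simps)
    then have "V (x i) \<le> V (d (N i) + e (N i) * a)" by (intro anti) simp
    then have "real (N i) * V (x i) \<le> real (N i) * V (d (N i) + e (N i) * a)"
      by (intro mult_left_mono) auto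
    then show ?case using elim by linarith
  qed
next
  fix b assume b: "b < z0 powr (-1/\<gamma>)"
  have "((\<lambda>y. y powr (-1/\<gamma>)) \<longlongrightarrow> z0 powr (-1/\<gamma>)) (at_right z0)"
    using gcont[OF z0] filterlim_at_split by blast
  then have "eventually (\<lambda>y. b < y powr (-1/\<gamma>)) (at_right z0)" using b by (rule order_tendstoD)
  then obtain b' where b': "b' > z0" "\<And>y. z0 < y \<Longrightarrow> y < b' \<Longrightarrow> b < y powr (-1/\<gamma>)"
    unfolding eventually_at_right_field by blast
  define a where "a = (b' + z0)/2"
  have a: "z0 < a" "a < b'" using b' z0 by (auto simp: a_def)
  have ga: "b < a powr (-1/\<gamma>)" using b' a by blast
  have e1: "eventually (\<lambda>i. b < real (N i) * V (d (N i) + e (N i) * a)) F"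
    using Hc[OF N, of a] a ga z0 by (intro order_tendstoD) auto
  have e2: "eventually (\<lambda>i. (x i - d (N i)) / e (N i) < a) F"
    using lim a by (intro order_tendstoD) auto
  show "eventually (\<lambda>i. b < real (N i) * V (x i)) F"
    using e1 e2
  proof eventually_elim
    case (elim i)
    then have "x i < d (N i) + e (N i) * a" using epos[of "N i"] by (simp add: field_simps)
    then have "V (d (N i) + e (N i) * a) \<le> V (x i)" by (intro anti) simp
    then have "real (N i) * V (d (N i) + e (N i) * a) \<le> real (N i) * V (x i)"
      by (intro mult_left_mono) auto
    then show ?case using elim by linarith
  qed
qed

end


lemma div2_filterlim: "filterlim (\<lambda>n::nat. n div 2) sequentially sequentially"
  unfolding filterlim_at_top eventually_sequentially
  by (metis div_le_mono nonzero_mult_div_cancel_right zero_neq_numeral)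

lemma chain_bdd:
  fixes f :: "nat \<Rightarrow> real"
  assumes rel: "\<And>n. n \<ge> N0 \<Longrightarrow> f n \<le> \<beta> * f (n div 2) + C"
    and b: "0 \<le> \<beta>" "\<beta> < 1"
  shows "\<exists>B. \<forall>n. f n \<le> B"
proof -
  define B where "B = max (Max (f ` {..N0})) (C / (1 - \<beta>))"
  have "f n \<le> B" for n
  proof (induction n rule: less_induct)
    case (less n)
    show ?case
    proof (cases "n \<le> N0")
      case True
      then have "f n \<le> Max (f ` {..N0})" by (intro Max_ge) auto
      then show ?thesis unfolding B_def by linarith
    next
      case False
      then have "n div 2 < n" by auto
      then have "f (n div 2) \<le> B" by (rule less.IH)
      then have "\<beta> * f (n div 2) \<le> \<beta> * B" using b by (intro mult_left_mono) auto
      moreover have "C \<le> (1 - \<beta>) * B"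
      proof -
        have "C / (1 - \<beta>) \<le> B" unfolding B_def by linarith
        then show ?thesis using b by (simp add: field_simps)
      qed
      ultimately show ?thesis using rel[of n] False by (simp add: algebra_simps)
    qed
  qed
  then show ?thesis by blast
qed

lemma chain_zero:
  fixes f :: "nat \<Rightarrow> real"
  assumes f0: "\<And>n. 0 \<le> f n" and fB: "\<And>n. f n \<le> B"
    and b: "0 \<le> \<beta>" "\<beta> < 1"
    and rel: "\<And>\<epsilon>. \<epsilon> > 0 \<Longrightarrow> eventually (\<lambda>n. f n \<le> \<beta> * f (n div 2) + \<epsilon>) sequentially"
  shows "f \<longlonglongrightarrow> 0"
proof (rule order_tendstoI)
  fix a :: real assume "a < 0" then show "eventually (\<lambda>n. a < f n) sequentially"
    using f0 by (auto intro: always_eventually less_le_trans)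
next
  fix a :: real assume a: "a > 0"
  define \<epsilon> where "\<epsilon> = a * (1 - \<beta>) / 4"
  have \<epsilon>: "\<epsilon> > 0" using a b by (simp add: \<epsilon>_def)
  have step: "eventually (\<lambda>n. f n \<le> \<beta> ^ k * B + \<epsilon> / (1 - \<beta>)) sequentially" for k
  proof (induction k)
    case 0
    show ?case using fB \<epsilon> b by (auto intro!: always_eventually add_increasing2)
  next
    case (Suc k)
    have "eventually (\<lambda>n. f (n div 2) \<le> \<beta> ^ k * B + \<epsilon> / (1 - \<beta>)) sequentially"
      using filterlim_iff[THEN iffD1, OF div2_filterlim] Suc by blast
    with rel[OF \<epsilon>] show ?case
    proof eventually_elim
      case (elim n)
      have "\<beta> * f (n div 2) \<le> \<beta> * (\<beta> ^ k * B + \<epsilon> / (1 - \<beta>))"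
        using elim b by (intro mult_left_mono) auto
      also have "\<dots> + \<epsilon> = \<beta> ^ Suc k * B + \<epsilon> / (1 - \<beta>)"
        using b by (simp add: field_simps)
      finally show ?case using elim by linarith
    qed
  qed
  have "(\<lambda>k. \<beta> ^ k * B) \<longlonglongrightarrow> 0 * B"
    using b by (intro tendsto_mult LIMSEQ_power_zero tendsto_const) auto
  then have "eventually (\<lambda>k. \<beta> ^ k * B < \<epsilon>) sequentially" using \<epsilon> by (intro order_tendstoD) auto
  then obtain k where k: "\<beta> ^ k * B < \<epsilon>" by (auto simp: eventually_sequentially)
  have "\<epsilon> + \<epsilon> / (1 - \<beta>) < a"
  proof -
    have "\<epsilon> / (1 - \<beta>) = a / 4" using b by (simp add: \<epsilon>_def field_simps)
    moreover have "\<epsilon> \<le> a / 4" using b a by (simp add: \<epsilon>_def field_simps)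
    ultimately show ?thesis using a by linarith
  qed
  then show "eventually (\<lambda>n. f n < a) sequentially"
    using step[of k] k by (auto elim!: eventually_mono)
qed



locale evt2 = evt +
  assumes Vnn: "\<And>x. V x \<ge> 0" and V0: "(V \<longlongrightarrow> 0) at_top" and Vsome: "\<exists>P. V P > 0"
begin

lemma ratio_half: "(\<lambda>n. real (n div 2) / real n) \<longlonglongrightarrow> 1/2"
proof (rule tendsto_sandwich[of "\<lambda>n. 1/2 - 1 / real n" _ _ "\<lambda>n. 1/2"])
  show "\<forall>\<^sub>F n in sequentially. 1 / 2 - 1 / real n \<le> real (n div 2) / real n"
    using eventually_gt_at_top[of 0]
  proof eventually_elim
    case (elim n)
    have "real n \<le> 2 + 2 * real (n div 2)" by linarith
    then have "real n * real n \<le> real n * (2 + 2 * real (n div 2))" by (intro mult_left_mono) auto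
    then show ?case using elim by (simp add: field_simps)
  qed
  show "\<forall>\<^sub>F n in sequentially. real (n div 2) / real n \<le> 1 / 2"
    using eventually_gt_at_top[of 0]
  proof eventually_elim
    case (elim n)
    have "2 * real (n div 2) \<le> real n" by linarith
    then show ?case using elim by (simp add: field_simps)
  qed
  have "(\<lambda>n. 1/2 - 1 / real n) \<longlonglongrightarrow> 1/2 - 0" by (intro tendsto_intros lim_inverse_n')
  then show "(\<lambda>n. 1/2 - 1 / real n) \<longlonglongrightarrow> 1/2" by simp
qed simp

lemma half_lim:
  assumes z: "z > 0"
  shows "(\<lambda>n. (d n + e n * z - d (n div 2)) / e (n div 2)) \<longlonglongrightarrow> 2 powr \<gamma> * z"
proof (rule INV[OF div2_filterlim])
  show "0 < 2 powr \<gamma> * z" using z by simp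
  have "(\<lambda>n. (real (n div 2) / real n) * (real n * V (d n + e n * z))) \<longlonglongrightarrow> 1/2 * z powr (-1/\<gamma>)"
    by (intro tendsto_mult ratio_half H z)
  moreover have "1/2 * z powr (-1/\<gamma>) = (2 powr \<gamma> * z) powr (-1/\<gamma>)"
    using gpos z by (simp add: powr_mult powr_powr powr_minus_divide)
  ultimately have "(\<lambda>n. (real (n div 2) / real n) * (real n * V (d n + e n * z))) \<longlonglongrightarrow> (2 powr \<gamma> * z) powr (-1/\<gamma>)"
    by simp
  then show "(\<lambda>n. real (n div 2) * V (d n + e n * z)) \<longlonglongrightarrow> (2 powr \<gamma> * z) powr (-1/\<gamma>)"
    by (rule Lim_transform_eventually) (use eventually_gt_at_top[of 0] in \<open>eventually_elim, simp\<close>)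
qed

lemma L1e: "(\<lambda>n. e n / e (n div 2)) \<longlonglongrightarrow> 2 powr \<gamma>"
proof -
  have "(\<lambda>n. (d n + e n * 2 - d (n div 2)) / e (n div 2) - (d n + e n * 1 - d (n div 2)) / e (n div 2))
     \<longlonglongrightarrow> 2 powr \<gamma> * 2 - 2 powr \<gamma> * 1"
    by (intro tendsto_diff half_lim) auto
  moreover have "(d n + e n * 2 - d (n div 2)) / e (n div 2) - (d n + e n * 1 - d (n div 2)) / e (n div 2)
     = e n / e (n div 2)" for n
    using epos[of "n div 2"] by (simp add: field_simps)
  ultimately show ?thesis by simp
qed

lemma L1d: "(\<lambda>n. (d n - d (n div 2)) / e (n div 2)) \<longlonglongrightarrow> 0"
proof -
  have "(\<lambda>n. (d n + e n * 1 - d (n div 2)) / e (n div 2) - e n / e (n div 2))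
     \<longlonglongrightarrow> 2 powr \<gamma> * 1 - 2 powr \<gamma>"
    by (intro tendsto_diff half_lim L1e) auto
  moreover have "(d n + e n * 1 - d (n div 2)) / e (n div 2) - e n / e (n div 2)
     = (d n - d (n div 2)) / e (n div 2)" for n
    using epos[of "n div 2"] by (simp add: field_simps)
  ultimately show ?thesis by simp
qed

lemma Vw0: "z > 0 \<Longrightarrow> (\<lambda>n. V (d n + e n * z)) \<longlonglongrightarrow> 0"
proof -
  assume z: "z > 0"
  have "(\<lambda>n. (real n * V (d n + e n * z)) * inverse (real n)) \<longlonglongrightarrow> z powr (-1/\<gamma>) * 0"
    by (intro tendsto_mult H z lim_inverse_n)
  then have "(\<lambda>n. (real n * V (d n + e n * z)) * inverse (real n)) \<longlonglongrightarrow> 0" by simp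
  then show ?thesis
    by (rule Lim_transform_eventually) (use eventually_gt_at_top[of 0] in \<open>eventually_elim, simp\<close>)
qed

lemma Vpos: "V x > 0"
proof (rule ccontr)
  assume "\<not> V x > 0"
  then have VM: "V x = 0" using Vnn[of x] by linarith
  obtain P where P: "V P > 0" using Vsome by blast
  have ev1: "eventually (\<lambda>n. V (d n + e n * 1) < V P) sequentially"
    using Vw0[of 1] P by (intro order_tendstoD) auto
  have ev2: "eventually (\<lambda>n. 0 < real n * V (d n + e n * 2)) sequentially"
    using order_tendstoD(1)[OF H[of 2]] by simp
  have "eventually (\<lambda>n. e n < x - P) sequentially"
    using ev1 ev2
  proof eventually_elim
    case (elim n)
    have a: "P < d n + e n * 1" using less_of_V[OF elim(1)] .
    have "V (d n + e n * 2) > 0" using elim(2) by (simp add: zero_less_mult_iff)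
    then have "d n + e n * 2 < x" using VM less_of_V by auto
    with a show ?case by simp
  qed
  then obtain N1 where N1: "\<And>n. n \<ge> N1 \<Longrightarrow> e n < x - P" by (auto simp: eventually_sequentially)
  define \<beta> where "\<beta> = (1 + 2 powr \<gamma>) / 2"
  have g1: "2 powr \<gamma> > 1" using gpos by simp
  then have \<beta>1: "\<beta> > 1" "\<beta> < 2 powr \<gamma>" by (auto simp: \<beta>_def)
  have "eventually (\<lambda>n. \<beta> < e n / e (n div 2)) sequentially"
    using L1e \<beta>1 by (intro order_tendstoD) auto
  then obtain N2 where N2: "\<And>n. n \<ge> N2 \<Longrightarrow> \<beta> < e n / e (n div 2)" by (auto simp: eventually_sequentially)
  define K where "K = Suc (max N1 N2)"
  have grow: "e (2 ^ j * K) \<ge> \<beta> ^ j * e K" for j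
  proof (induction j)
    case (Suc j)
    have "(2 ^ Suc j * K) div 2 = 2 ^ j * K" by simp
    moreover have "2 ^ Suc j * K \<ge> N2" unfolding K_def
      by (metis le_SucI max.cobounded2 mult.commute mult_le_mono2 one_le_numeral one_le_power le_trans mult_1_right)
    ultimately have "\<beta> < e (2 ^ Suc j * K) / e (2 ^ j * K)" using N2 by metis
    then have "\<beta> * e (2 ^ j * K) \<le> e (2 ^ Suc j * K)" using epos[of "2 ^ j * K"] by (simp add: field_simps)
    moreover have "\<beta> * (\<beta> ^ j * e K) \<le> \<beta> * e (2 ^ j * K)" using Suc \<beta>1 by (intro mult_left_mono) auto
    ultimately show ?case by simp
  qed simp
  obtain j where j: "(x - P) / e K < \<beta> ^ j" using real_arch_pow[OF \<beta>1(1)] by blast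
  have h1: "x - P < \<beta> ^ j * e K" using j epos[of K] by (simp add: field_simps)
  have h2: "N1 \<le> 2 ^ j * K" unfolding K_def
      by (metis le_SucI max.cobounded1 mult.commute mult_le_mono2 one_le_numeral one_le_power le_trans mult_1_right)
  show False using h1 grow[of j] N1[OF h2] by linarith
qed

end


context evt2 begin

lemma r0: "(\<lambda>n. d n / e n) \<longlonglongrightarrow> 0"
proof -
  define f where "f n = max (d n / e n) 0" for n
  define \<beta> where "\<beta> = (1 + 2 powr (-\<gamma>)) / 2"
  have "2 powr \<gamma> > 1" using gpos by simp
  then have g1: "2 powr (-\<gamma>) < 1" "0 < 2 powr (-\<gamma>)" by (auto simp: powr_minus inverse_less_1_iff)
  then have b: "0 \<le> \<beta>" "\<beta> < 1" "2 powr (-\<gamma>) < \<beta>" by (auto simp: \<beta>_def)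
  have "(\<lambda>n. inverse (e n / e (n div 2))) \<longlonglongrightarrow> inverse (2 powr \<gamma>)"
    by (intro tendsto_inverse L1e) simp
  then have inv: "(\<lambda>n. e (n div 2) / e n) \<longlonglongrightarrow> 2 powr (-\<gamma>)" by (simp add: powr_minus)
  have rel: "eventually (\<lambda>n. f n \<le> \<beta> * f (n div 2) + \<epsilon>) sequentially" if \<epsilon>: "\<epsilon> > 0" for \<epsilon>
  proof -
    have e1: "eventually (\<lambda>n. (d n - d (n div 2)) / e (n div 2) < \<epsilon>) sequentially"
      using L1d \<epsilon> by (intro order_tendstoD) auto
    have e2: "eventually (\<lambda>n. e (n div 2) / e n < \<beta>) sequentially"
      using inv b by (intro order_tendstoD) auto
    show ?thesis using e1 e2
    proof eventually_elim
      case (elim n)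
      define m where "m = n div 2"
      define A where "A = (d n - d m) / e m"
      define k where "k = e m / e n"
      have kpos: "k > 0" using epos[of m] epos[of n] by (simp add: k_def)
      have id: "d n / e n = (A + d m / e m) * k"
        using epos[of m] epos[of n] by (simp add: A_def k_def field_simps)
      have A: "A < \<epsilon>" and kb: "k < \<beta>" using elim by (simp_all add: A_def k_def m_def)
      have fm: "0 \<le> f m" "d m / e m \<le> f m" by (auto simp: f_def)
      show ?case
      proof (cases "A + d m / e m \<le> 0")
        case True
        then have "d n / e n \<le> 0" unfolding id using kpos by (simp add: mult_nonpos_nonneg)
        then have "f n = 0" by (simp add: f_def)
        then show ?thesis using fm b \<epsilon> unfolding m_def by simp
      next
        case False
        have "d n / e n \<le> (\<epsilon> + f m) * \<beta>" unfolding id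
          using False A fm kb kpos by (intro mult_mono) auto
        also have "\<dots> \<le> \<beta> * f m + \<epsilon>" using b \<epsilon> fm by (simp add: algebra_simps mult_left_le)
        finally have "d n / e n \<le> \<beta> * f m + \<epsilon>" .
        moreover have "0 \<le> \<beta> * f m + \<epsilon>" using b fm \<epsilon> by simp
        ultimately show ?thesis by (simp add: f_def m_def)
      qed
    qed
  qed
  obtain N0 where N0: "\<And>n. n \<ge> N0 \<Longrightarrow> f n \<le> \<beta> * f (n div 2) + 1"
    using rel[of 1] by (auto simp: eventually_sequentially)
  obtain B where B: "\<And>n. f n \<le> B" using chain_bdd[of N0 f \<beta> 1, OF N0 b(1,2)] by blast
  have f0: "f \<longlonglongrightarrow> 0"
    by (rule chain_zero[OF _ B b(1,2) rel]) (auto simp: f_def)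
  show ?thesis
  proof (rule order_tendstoI)
    fix a :: real assume a: "a < 0"
    have "eventually (\<lambda>n. V (d n + e n * (-a)) < V 0) sequentially"
      using Vw0[of "-a"] a Vpos[of 0] by (intro order_tendstoD) auto
    then show "eventually (\<lambda>n. a < d n / e n) sequentially"
    proof eventually_elim
      case (elim n)
      then have "0 < d n + e n * (-a)" by (rule less_of_V)
      then show ?case using epos[of n] by (simp add: field_simps)
    qed
  next
    fix a :: real assume a: "a > 0"
    have "eventually (\<lambda>n. f n < a) sequentially" using f0 a by (intro order_tendstoD) auto
    then show "eventually (\<lambda>n. d n / e n < a) sequentially"
      by eventually_elim (simp add: f_def)
  qed
qed

lemma RV:
  assumes c: "c > 0"
  shows "((\<lambda>y. V (c * y) / V y) \<longlongrightarrow> c powr (-1/\<gamma>)) at_top"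
proof -
  define N where "N y = nat \<lfloor>inverse (V y)\<rfloor>" for y
  have hV: "filterlim V (at_right 0) at_top"
  proof -
    have "\<forall>x. V x \<in> {0<..} \<and> V x \<noteq> 0" using Vpos by (metis greaterThan_iff less_irrefl)
    then show ?thesis unfolding filterlim_at using V0 by (auto intro: always_eventually)
  qed
  have hN: "filterlim N sequentially at_top"
    unfolding N_def
    by (rule filterlim_compose[OF filterlim_nat_sequentially
          filterlim_compose[OF filterlim_floor_sequentially
            filterlim_compose[OF filterlim_inverse_at_top_right hV]]])
  have hNV: "((\<lambda>y. real (N y) * V y) \<longlongrightarrow> 1) at_top"
  proof (rule tendsto_sandwich[of "\<lambda>y. 1 - V y" _ _ "\<lambda>y. 1"])
    have *: "real (N y) = of_int \<lfloor>inverse (V y)\<rfloor>" "inverse (V y) - 1 < of_int \<lfloor>inverse (V y)\<rfloor>"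
        "of_int \<lfloor>inverse (V y)\<rfloor> \<le> inverse (V y)" for y
      using Vpos[of y] by (auto simp: N_def)
    show "\<forall>\<^sub>F y in at_top. 1 - V y \<le> real (N y) * V y"
    proof (rule always_eventually, rule allI)
      fix y
      have "(inverse (V y) - 1) * V y \<le> of_int \<lfloor>inverse (V y)\<rfloor> * V y"
        using *(2)[of y] Vpos[of y] by (intro mult_right_mono) auto
      moreover have "(inverse (V y) - 1) * V y = 1 - V y" using Vpos[of y] by (simp add: field_simps)
      ultimately show "1 - V y \<le> real (N y) * V y" using *(1)[of y] by simp
    qed
    show "\<forall>\<^sub>F y in at_top. real (N y) * V y \<le> 1"
    proof (rule always_eventually, rule allI)
      fix y
      have "of_int \<lfloor>inverse (V y)\<rfloor> * V y \<le> inverse (V y) * V y"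
        using *(3)[of y] Vpos[of y] by (intro mult_right_mono) auto
      then show "real (N y) * V y \<le> 1" using Vpos[of y] *(1)[of y] by simp
    qed
    have "((\<lambda>y. 1 - V y) \<longlongrightarrow> 1 - 0) at_top" by (intro tendsto_intros V0)
    then show "((\<lambda>y. 1 - V y) \<longlongrightarrow> 1) at_top" by simp
  qed simp
  have hI: "((\<lambda>y. (y - d (N y)) / e (N y)) \<longlongrightarrow> 1) at_top"
    by (rule INV[OF hN]) (use hNV in simp_all)
  have hr: "((\<lambda>y. d (N y) / e (N y)) \<longlongrightarrow> 0) at_top"
    by (rule filterlim_compose[OF r0 hN])
  have "((\<lambda>y. c * ((y - d (N y)) / e (N y)) + (c - 1) * (d (N y) / e (N y))) \<longlongrightarrow> c * 1 + (c - 1) * 0) at_top"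
    by (intro tendsto_intros hI hr)
  moreover have "c * ((y - d (N y)) / e (N y)) + (c - 1) * (d (N y) / e (N y)) = (c * y - d (N y)) / e (N y)" for y
    using epos[of "N y"] by (simp add: field_simps)
  ultimately have hc: "((\<lambda>y. (c * y - d (N y)) / e (N y)) \<longlongrightarrow> c) at_top" by simp
  have hF: "((\<lambda>y. real (N y) * V (c * y)) \<longlongrightarrow> c powr (-1/\<gamma>)) at_top"
    by (rule FWD[OF hN c hc])
  have "((\<lambda>y. (real (N y) * V (c * y)) / (real (N y) * V y)) \<longlongrightarrow> c powr (-1/\<gamma>) / 1) at_top"
    by (rule tendsto_divide[OF hF hNV]) simp
  then have lim: "((\<lambda>y. (real (N y) * V (c * y)) / (real (N y) * V y)) \<longlongrightarrow> c powr (-1/\<gamma>)) at_top" by simp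
  have "eventually (\<lambda>y. N y \<ge> 1) at_top" using hN by (simp add: filterlim_at_top)
  then have "eventually (\<lambda>y. (real (N y) * V (c * y)) / (real (N y) * V y) = V (c * y) / V y) at_top"
    by eventually_elim simp
  then show ?thesis by (rule Lim_transform_eventually[OF lim])
qed

end


lemma mult_at_top: "c > 0 \<Longrightarrow> filterlim (\<lambda>y::real. c * y) at_top at_top"
  by (rule filterlim_tendsto_pos_mult_at_top[OF tendsto_const _ filterlim_ident])

lemma half_lt: "(u::real) \<le> (l + a) / 2 \<Longrightarrow> l < a \<Longrightarrow> u < a" by (simp add: field_simps)
lemma mid_lt: "(a::real) < b \<Longrightarrow> (a + b) / 2 < b \<and> a < (a + b) / 2" by (simp add: field_simps)
lemma max_lt: "max a b < (u::real) \<Longrightarrow> a < u" by simp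

lemma main_equiv:
  fixes V W U0 Us :: "real \<Rightarrow> real" and lam \<gamma> :: real
  assumes g: "\<gamma> > 0" and lam0: "lam > 0"
    and G0: "\<And>t x. t > 1 \<Longrightarrow> (U0 t \<le> x \<longleftrightarrow> V x \<le> 1 / t)"
    and Gs: "\<And>t x. t > 1 \<Longrightarrow> (Us t \<le> x \<longleftrightarrow> W x \<le> 1 / t)"
    and Vpos: "\<And>x. V x > 0" and V0: "(V \<longlongrightarrow> 0) at_top"
    and RV: "\<And>a. a > 0 \<Longrightarrow> ((\<lambda>y. V (a * y) / V y) \<longlongrightarrow> a powr (-1/\<gamma>)) at_top"
  shows "((\<lambda>x. W x / V x) \<longlongrightarrow> lam) at_top \<longleftrightarrow> ((\<lambda>t. Us t / U0 t) \<longlongrightarrow> lam powr \<gamma>) at_top"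
proof -
  define L where "L = lam powr \<gamma>"
  have Lpos: "L > 0" using lam0 by (simp add: L_def)
  have U0top: "filterlim U0 at_top at_top"
    unfolding filterlim_at_top
  proof
    fix Z
    have "eventually (\<lambda>t. t > max 1 (1 / V Z)) at_top" by (rule eventually_gt_at_top)
    then show "eventually (\<lambda>t. Z \<le> U0 t) at_top"
    proof eventually_elim
      case (elim t)
      then have t1: "t > 1" and "t > 1 / V Z" by auto
      then have "1 / t < V Z" using Vpos[of Z] by (simp add: field_simps)
      then have "\<not> U0 t \<le> Z" using G0[OF t1] by simp
      then show ?case by simp
    qed
  qed
  have U0ev: "\<And>P. eventually P at_top \<Longrightarrow> eventually (\<lambda>t. P (U0 t)) at_top"
    using filterlim_iff[THEN iffD1, OF U0top] by blast
  have U0le: "V (U0 t) \<le> 1 / t" if "t > 1" for t using G0[OF that, of "U0 t"] by simp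
  have evpos: "eventually (\<lambda>t. U0 t > 0) at_top" using U0top by (simp add: filterlim_at_top_dense)
  have RV2: "((\<lambda>y. V (a * y) / V (b * y)) \<longlongrightarrow> (a / b) powr (-1/\<gamma>)) at_top" if ab: "a > 0" "b > 0" for a b
  proof -
    have "((\<lambda>y. V ((a / b) * (b * y)) / V (b * y)) \<longlongrightarrow> (a / b) powr (-1/\<gamma>)) at_top"
      by (rule filterlim_compose[OF RV mult_at_top]) (use ab in auto)
    then show ?thesis using ab by simp
  qed
  show ?thesis unfolding L_def[symmetric]
  proof
    assume hW: "((\<lambda>x. W x / V x) \<longlongrightarrow> lam) at_top"
    have hWc: "((\<lambda>y. W (a * y) / V (a * y)) \<longlongrightarrow> lam) at_top" if "a > 0" for a
      by (rule filterlim_compose[OF hW mult_at_top[OF that]])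
    have prodlim: "((\<lambda>y. W (a * y) / V (b * y)) \<longlongrightarrow> lam * (a / b) powr (-1/\<gamma>)) at_top"
      if ab: "a > 0" "b > 0" for a b
    proof -
      have "((\<lambda>y. W (a * y) / V (a * y) * (V (a * y) / V (b * y))) \<longlongrightarrow> lam * (a / b) powr (-1/\<gamma>)) at_top"
        by (intro tendsto_mult hWc RV2 ab)
      moreover have eq: "W (a * y) / V (a * y) * (V (a * y) / V (b * y)) = W (a * y) / V (b * y)" for y
        using Vpos[of "a * y"] Vpos[of "b * y"] by (simp add: divide_simps)
      ultimately show ?thesis by (simp only: eq)
    qed
    have up: "eventually (\<lambda>t. Us t \<le> \<theta> * U0 t) at_top" if th: "\<theta> > L" for \<theta>
    proof -
      have thpos: "\<theta> > 0" using th Lpos by linarith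
      have "\<theta> powr (-1/\<gamma>) < L powr (-1/\<gamma>)"
        using th Lpos g by (intro powr_less_mono2_neg) auto
      also have "L powr (-1/\<gamma>) = 1 / lam" using g lam0
        by (simp add: L_def powr_powr powr_minus divide_inverse)
      finally have "lam * (\<theta> / 1) powr (-1/\<gamma>) < 1" using lam0 by (simp add: field_simps)
      then have "eventually (\<lambda>y. W (\<theta> * y) / V (1 * y) < 1) at_top"
        using prodlim[OF thpos, of 1] by (intro order_tendstoD) auto
      then have "eventually (\<lambda>y. W (\<theta> * y) / V y < 1) at_top" by simp
      then have "eventually (\<lambda>t. W (\<theta> * U0 t) / V (U0 t) < 1) at_top"
        by (rule U0ev)
      moreover have "eventually (\<lambda>t::real. t > 1) at_top" using eventually_gt_at_top[of 1] by simp
      ultimately show ?thesis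
      proof eventually_elim
        case (elim t)
        then have "W (\<theta> * U0 t) < V (U0 t)" using Vpos[of "U0 t"] by (simp add: field_simps)
        then have "W (\<theta> * U0 t) \<le> 1 / t" using U0le[OF elim(2)] by linarith
        then show ?case using Gs[OF elim(2)] by simp
      qed
    qed
    have lo: "eventually (\<lambda>t. \<theta> * U0 t < Us t) at_top" if th: "\<theta> < L" "\<theta> > 0" for \<theta>
    proof -
      define \<delta> where "\<delta> = (\<theta> / L + 1) / 2"
      have tl: "\<theta> / L < 1" using th Lpos by simp
      have q: "0 < \<theta> / L" using th Lpos by simp
      have \<delta>: "\<delta> < 1" "\<theta> / L < \<delta>" "\<delta> > 0" 
      proof -
        have aux: "\<And>q::real. q < 1 \<Longrightarrow> 0 < q \<Longrightarrow> (q+1)/2 < 1 \<and> q < (q+1)/2 \<and> 0 < (q+1)/2" by auto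
        show "\<delta> < 1" "\<theta> / L < \<delta>" "\<delta> > 0" unfolding \<delta>_def using aux[OF tl q] by auto
      qed
      have a: "\<theta> / \<delta> < L" using \<delta> Lpos by (simp add: field_simps)
      have "L powr (-1/\<gamma>) < (\<theta> / \<delta>) powr (-1/\<gamma>)"
        using a th \<delta> g by (intro powr_less_mono2_neg) auto
      moreover have "L powr (-1/\<gamma>) = 1 / lam" using g lam0
        by (simp add: L_def powr_powr powr_minus divide_inverse)
      ultimately have "1 < lam * (\<theta> / \<delta>) powr (-1/\<gamma>)"
        using mult_strict_left_mono[of "L powr (-1/\<gamma>)" "(\<theta> / \<delta>) powr (-1/\<gamma>)" lam] lam0 by simp
      then have "eventually (\<lambda>y. 1 < W (\<theta> * y) / V (\<delta> * y)) at_top"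
        using prodlim[OF th(2) \<delta>(3)] by (intro order_tendstoD) auto
      then have "eventually (\<lambda>t. 1 < W (\<theta> * U0 t) / V (\<delta> * U0 t)) at_top"
        by (rule U0ev)
      moreover have "eventually (\<lambda>t::real. t > 1) at_top" using eventually_gt_at_top[of 1] by simp
      ultimately show ?thesis using evpos
      proof eventually_elim
        case (elim t)
        then have "V (\<delta> * U0 t) < W (\<theta> * U0 t)" using Vpos[of "\<delta> * U0 t"] by (simp add: field_simps)
        moreover have "\<delta> * U0 t < U0 t" using \<delta> elim(3) by simp
        then have "\<not> U0 t \<le> \<delta> * U0 t" by simp
        then have "1 / t < V (\<delta> * U0 t)" using G0[OF elim(2)] by simp
        ultimately have "\<not> W (\<theta> * U0 t) \<le> 1 / t" by linarith
        then show ?case using Gs[OF elim(2), of "\<theta> * U0 t"] by (simp add: not_le)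
      qed
    qed
    show "((\<lambda>t. Us t / U0 t) \<longlongrightarrow> L) at_top"
    proof (rule order_tendstoI)
      fix a assume a: "a > L"
      have "eventually (\<lambda>t. Us t \<le> ((L + a) / 2) * U0 t) at_top" using a by (intro up) simp
      then show "eventually (\<lambda>t. Us t / U0 t < a) at_top" using evpos
      proof eventually_elim
        case (elim t)
        then have "Us t / U0 t \<le> (L + a) / 2" by (simp add: field_simps)
        then show ?case using a by (rule half_lt)
      qed
    next
      fix a assume a: "a < L"
      have "eventually (\<lambda>t. max a (L/2) * U0 t < Us t) at_top" using a Lpos by (intro lo) auto
      then show "eventually (\<lambda>t. a < Us t / U0 t) at_top" using evpos
      proof eventually_elim
        case (elim t)
        then have "max a (L/2) < Us t / U0 t" by (metis pos_less_divide_eq)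
        then show ?case by (rule max_lt)
      qed
    qed
  next
    assume hU: "((\<lambda>t. Us t / U0 t) \<longlongrightarrow> L) at_top"
    have tinf: "filterlim (\<lambda>x. inverse (\<kappa> * V x)) at_top at_top" if k: "\<kappa> > 0" for \<kappa>
    proof -
      have "((\<lambda>x. \<kappa> * V x) \<longlongrightarrow> \<kappa> * 0) at_top" by (intro tendsto_intros V0)
      moreover have "\<forall>x. \<kappa> * V x \<in> {0<..} \<and> \<kappa> * V x \<noteq> 0" using k Vpos by (metis greaterThan_iff less_irrefl mult_pos_pos)
      ultimately have "filterlim (\<lambda>x. \<kappa> * V x) (at_right 0) at_top"
        unfolding filterlim_at by (auto intro: always_eventually)
      then show ?thesis by (rule filterlim_compose[OF filterlim_inverse_at_top_right])
    qed
    have evt: "eventually (\<lambda>x. P (inverse (\<kappa> * V x))) at_top"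
      if "\<kappa> > 0" "eventually P at_top" for \<kappa> P
      using filterlim_iff[THEN iffD1, OF tinf[OF that(1)]] that(2) by blast
    have up: "eventually (\<lambda>x. W x \<le> \<kappa> * V x) at_top" if k: "\<kappa> > lam" for \<kappa>
    proof -
      have kpos: "\<kappa> > 0" using k lam0 by linarith
      define \<theta> where "\<theta> = (L + \<kappa> powr \<gamma>) / 2"
      have "L < \<kappa> powr \<gamma>" unfolding L_def using k lam0 g by (intro powr_less_mono2) auto
      then have th: "L < \<theta>" "\<theta> < \<kappa> powr \<gamma>" by (auto simp: \<theta>_def)
      have thpos: "\<theta> > 0" using th Lpos by linarith
      have e1: "eventually (\<lambda>t. Us t / U0 t < \<theta> \<and> U0 t > 0 \<and> t > 1) at_top"
        using order_tendstoD(2)[OF hU th(1)] evpos eventually_gt_at_top[of 1]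
        by eventually_elim auto
      have "(1 / \<theta>) powr (-1/\<gamma>) = \<theta> powr (1/\<gamma>)" using thpos by (simp add: powr_divide powr_minus_divide)
      also have "\<dots> < (\<kappa> powr \<gamma>) powr (1/\<gamma>)" using th thpos g by (intro powr_less_mono2) auto
      also have "\<dots> = \<kappa>" using g kpos by (simp add: powr_powr)
      finally have "eventually (\<lambda>x. V ((1 / \<theta>) * x) / V x < \<kappa>) at_top"
        using RV[of "1/\<theta>"] thpos by (intro order_tendstoD) auto
      with evt[OF kpos e1] show ?thesis
      proof eventually_elim
        case (elim x)
        define t where "t = inverse (\<kappa> * V x)"
        have t1: "t > 1" and q: "Us t / U0 t < \<theta>" and u: "U0 t > 0" using elim(1) by (auto simp: t_def)
        have it: "1 / t = \<kappa> * V x" by (simp add: t_def divide_inverse)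
        have "V ((1 / \<theta>) * x) < \<kappa> * V x" using elim(2) Vpos[of x] by (simp add: field_simps)
        then have "U0 t \<le> (1 / \<theta>) * x" using G0[OF t1] it by simp
        then have "\<theta> * U0 t \<le> x" using thpos by (simp add: field_simps)
        moreover have "Us t < \<theta> * U0 t" using q u by (simp add: field_simps)
        ultimately have "Us t \<le> x" by linarith
        then show ?case using Gs[OF t1] it by simp
      qed
    qed
    have lo: "eventually (\<lambda>x. \<kappa> * V x < W x) at_top" if k: "\<kappa> < lam" "\<kappa> > 0" for \<kappa>
    proof -
      define \<theta> where "\<theta> = (\<kappa> powr \<gamma> + L) / 2"
      have "\<kappa> powr \<gamma> < L" unfolding L_def using k lam0 g by (intro powr_less_mono2) auto
      moreover have "\<kappa> powr \<gamma> > 0" using k by simp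
      ultimately have th: "\<theta> < L" "\<kappa> powr \<gamma> < \<theta>" "\<theta> > 0"
      proof -
        assume h1: "\<kappa> powr \<gamma> < L" and h2: "\<kappa> powr \<gamma> > 0"
        have m: "(\<kappa> powr \<gamma> + L) / 2 < L \<and> \<kappa> powr \<gamma> < (\<kappa> powr \<gamma> + L) / 2" by (rule mid_lt[OF h1])
        then show "\<theta> < L" "\<kappa> powr \<gamma> < \<theta>" unfolding \<theta>_def by auto
        then show "\<theta> > 0" using h2 by (meson order.strict_trans)
      qed
      have e1: "eventually (\<lambda>t. \<theta> < Us t / U0 t \<and> U0 t > 0 \<and> t > 1) at_top"
        using order_tendstoD(1)[OF hU th(1)] evpos eventually_gt_at_top[of 1]
        by eventually_elim auto
      have "\<kappa> = (\<kappa> powr \<gamma>) powr (1/\<gamma>)" using g k by (simp add: powr_powr)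
      also have "\<dots> < \<theta> powr (1/\<gamma>)" using th k g by (intro powr_less_mono2) auto
      also have "\<dots> = (1 / \<theta>) powr (-1/\<gamma>)" using th by (simp add: powr_divide powr_minus_divide)
      finally have "eventually (\<lambda>x. \<kappa> < V ((1 / \<theta>) * x) / V x) at_top"
        using RV[of "1/\<theta>"] th by (intro order_tendstoD) auto
      with evt[OF k(2) e1] show ?thesis
      proof eventually_elim
        case (elim x)
        define t where "t = inverse (\<kappa> * V x)"
        have t1: "t > 1" and q: "\<theta> < Us t / U0 t" and u: "U0 t > 0" using elim(1) by (auto simp: t_def)
        have it: "1 / t = \<kappa> * V x" by (simp add: t_def divide_inverse)
        have "\<kappa> * V x < V ((1 / \<theta>) * x)" using elim(2) Vpos[of x] by (simp add: field_simps)
        then have "\<not> U0 t \<le> (1 / \<theta>) * x" using G0[OF t1] it by simp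
        then have "x < \<theta> * U0 t" using th by (simp add: field_simps)
        moreover have "\<theta> * U0 t < Us t" using q u by (simp add: field_simps)
        ultimately have "\<not> Us t \<le> x" by linarith
        then show ?case using Gs[OF t1] it by simp
      qed
    qed
    show "((\<lambda>x. W x / V x) \<longlongrightarrow> lam) at_top"
    proof (rule order_tendstoI)
      fix a assume a: "a > lam"
      have "eventually (\<lambda>x. W x \<le> ((lam + a) / 2) * V x) at_top" using a by (intro up) simp
      then show "eventually (\<lambda>x. W x / V x < a) at_top"
      proof eventually_elim
        case (elim x)
        then have "W x / V x \<le> (lam + a) / 2" using Vpos[of x] by (simp add: field_simps)
        then show ?case using a by (rule half_lt)
      qed
    next
      fix a assume a: "a < lam"
      have "eventually (\<lambda>x. max a (lam/2) * V x < W x) at_top" using a lam0 by (intro lo) auto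
      then show "eventually (\<lambda>x. a < W x / V x) at_top"
      proof eventually_elim
        case (elim x)
        then have "max a (lam/2) < W x / V x" using Vpos[of x] by (metis pos_less_divide_eq)
        then show ?case by (rule max_lt)
      qed
    qed
  qed
qed



theorem mainTheorem5:
  fixes F0 Fs :: "real \<Rightarrow> real" and c s \<gamma> :: real
  assumes "distribution_function F0" and "distribution_function Fs"
    and "s \<ge> 0" and "\<gamma> > 0"
    and "max_domain_of_attraction F0 \<gamma>"
  shows "((\<lambda>x. (1 - Fs x) / (1 - F0 x)) \<longlongrightarrow> exp (c * s)) at_top \<longleftrightarrow>
         ((\<lambda>t. tail_quantile Fs t / tail_quantile F0 t) \<longlongrightarrow> exp (c * \<gamma> * s)) at_top"
proof -
  obtain d e where epos: "\<forall>n. e n > 0" and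
    H: "\<forall>z>0. (\<lambda>n. real n * (1 - F0 (d n + e n * z))) \<longlonglongrightarrow> z powr (-1/\<gamma>)"
    using mda_H[OF assms(1) assms(4) assms(5)] by blast
  have m: "mono F0" and t0: "(F0 \<longlongrightarrow> 0) at_bot" and t1: "(F0 \<longlongrightarrow> 1) at_top"
    using assms(1) by (auto simp: distribution_function_def)
  interpret E: evt2 "\<lambda>x. 1 - F0 x" d e \<gamma>
  proof
    show "\<And>x y. x \<le> y \<Longrightarrow> 1 - F0 y \<le> 1 - F0 x" using m by (simp add: mono_def)
    show "\<And>n. 0 < e n" using epos by blast
    show "0 < \<gamma>" by fact
    show "\<And>z. 0 < z \<Longrightarrow> (\<lambda>n. real n * (1 - F0 (d n + e n * z))) \<longlonglongrightarrow> z powr (- 1 / \<gamma>)"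
      using H by blast
    show "\<And>x. 0 \<le> 1 - F0 x" using df_bounds[OF assms(1)] by simp
    have "((\<lambda>x. 1 - F0 x) \<longlongrightarrow> 1 - 1) at_top" by (intro tendsto_intros t1)
    then show "((\<lambda>x. 1 - F0 x) \<longlongrightarrow> 0) at_top" by simp
    have "eventually (\<lambda>x. F0 x < 1) at_bot" using t0 by (rule order_tendstoD) simp
    then obtain P where "F0 P < 1" by (auto simp: eventually_at_bot_linorder)
    then show "\<exists>P. 0 < 1 - F0 P" by (intro exI[of _ P]) simp
  qed
  have eq: "exp (c * s) powr \<gamma> = exp (c * \<gamma> * s)" by (simp add: powr_def mult_ac)
  have "((\<lambda>x. (1 - Fs x) / (1 - F0 x)) \<longlongrightarrow> exp (c * s)) at_top \<longleftrightarrow>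
         ((\<lambda>t. tail_quantile Fs t / tail_quantile F0 t) \<longlongrightarrow> exp (c * s) powr \<gamma>) at_top"
  proof (rule main_equiv[where V = "\<lambda>x. 1 - F0 x" and W = "\<lambda>x. 1 - Fs x"])
    show "0 < \<gamma>" by fact
    show "0 < exp (c * s)" by simp
    show "\<And>t x. 1 < t \<Longrightarrow> (tail_quantile F0 t \<le> x) = (1 - F0 x \<le> 1 / t)"
      by (rule tq_galois[OF assms(1)])
    show "\<And>t x. 1 < t \<Longrightarrow> (tail_quantile Fs t \<le> x) = (1 - Fs x \<le> 1 / t)"
      by (rule tq_galois[OF assms(2)])
    show "\<And>x. 0 < 1 - F0 x" by (rule E.Vpos)
    show "((\<lambda>x. 1 - F0 x) \<longlongrightarrow> 0) at_top" by (rule E.V0)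
    show "\<And>a. 0 < a \<Longrightarrow> ((\<lambda>y. (1 - F0 (a * y)) / (1 - F0 y)) \<longlongrightarrow> a powr (- 1 / \<gamma>)) at_top"
      by (rule E.RV)
  qed
  then show ?thesis unfolding eq .
qed


end
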